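(* Let $p\in(1,\infty)$ and let $Y$ be a Banach space admitting an equivalent norm with $(\beta)$-modulus of power type $p$. Then there is a constant $C=C(Y)>0$ such that for every integer $l\ge1$, $$c_Y(P^\omega_l)\ge C\,l^{1/p}.$$
   Context: For a Banach space $X$ with closed unit ball $B_X$ and a sequence $(y_n)_{n\ge1}$ in $X$, let $\mathrm{sep}[(y_n)]:=\inf\{\|y_m-y_n\|: m\neq n\}$. The $(\beta)$-modulus of a norm is $$\overline{\beta}_X(t):=1-\sup\Big\{\inf_{n\ge1}\tfrac{\|x+y_n\|}{2}\ :\ x\in B_X,\ (y_n)_{n\ge1}\subset B_X,\ \mathrm{sep}[(y_n)]\ge t\Big\},$$ and the norm has $(\beta)$-modulus of power type $p$ if there is $c>0$ with $\overline{\beta}_X(t)\ge ct^p$ for all $t\in(0,2]$. The parasol graph $P^\omega_1$ has vertex set $\{r,b,s\}\cup\{t_i:i\ge1\}$ and edges $\{r,b\}$, $\{b,t_i\}$, $\{t_i,s\}$ ($i\ge1$). For $l\ge2$, $P^\omega_l$ is obtained from $P^\omega_{l-1}$ by replacing every edge $\{u,v\}$ of $P^\omega_{l-1}$ by a copy of $P^\omega_1$, identifying the vertex $r$ of the copy with one endpoint of the edge and the vertex $s$ of the copy with the other endpoint (the claim holds for any such choice of identifications). Each $P^\omega_l$ carries the unweighted shortest-path metric. The distortion of an injective map is $\mathrm{dist}(f)=\mathrm{Lip}(f)\mathrm{Lip}(f^{-1})$ and $c_Y(M):=\inf\{\mathrm{dist}(f): f\colon M\to Y\text{ injective}\}$ ($+\infty$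 if no bi-Lipschitz embedding exists). *)

theory Defs
  imports "HOL-Analysis.Analysis"
begin

definition is_norm_fun :: "('a::real_vector \<Rightarrow> real) \<Rightarrow> bool" where
  "is_norm_fun N \<longleftrightarrow> (\<forall>x y. N (x + y) \<le> N x + N y) \<and> (\<forall>c x. N (c *\<^sub>R x) = \<bar>c\<bar> * N x)
     \<and> (\<forall>x. N x = 0 \<longrightarrow> x = 0)"

definition equivalent_norm :: "('a::real_normed_vector \<Rightarrow> real) \<Rightarrow> bool" where
  "equivalent_norm N \<longleftrightarrow> is_norm_fun N \<and>
     (\<exists>a b. 0 < a \<and> 0 < b \<and> (\<forall>x. a * norm x \<le> N x \<and> N x \<le> b * norm x))"

definition unit_ballN :: "('a \<Rightarrow> real) \<Rightarrow> 'a set" where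
  "unit_ballN N = {x. N x \<le> 1}"

definition sepN :: "('a::real_vector \<Rightarrow> real) \<Rightarrow> (nat \<Rightarrow> 'a) \<Rightarrow> ereal" where
  "sepN N y = (INF mn \<in> {(m, n). m \<noteq> n}. ereal (N (y (fst mn) - y (snd mn))))"

text \<open>Sup of the empty set is -infinity (ereal), so the modulus is +infinity then.\<close>
definition beta_modulus :: "('a::real_vector \<Rightarrow> real) \<Rightarrow> real \<Rightarrow> ereal" where
  "beta_modulus N t = 1 - (SUP xy \<in> {(x, y). x \<in> unit_ballN N \<and> range y \<subseteq> unit_ballN N
        \<and> sepN N y \<ge> ereal t}. (INF n. ereal (N (fst xy + snd xy n) / 2)))"

definition beta_power_type :: "('a::real_vector \<Rightarrow> real) \<Rightarrow> real \<Rightarrow> bool" where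
  "beta_power_type N p \<longleftrightarrow> (\<exists>c>0. \<forall>t. 0 < t \<and> t \<le> 2 \<longrightarrow> beta_modulus N t \<ge> ereal (c * t powr p))"

definition distortion :: "'v set \<Rightarrow> ('v \<Rightarrow> 'v \<Rightarrow> real) \<Rightarrow> ('v \<Rightarrow> 'a::real_normed_vector) \<Rightarrow> ereal" where
  "distortion V d f =
     (SUP uv \<in> {(u, v). u \<in> V \<and> v \<in> V \<and> u \<noteq> v}. ereal (norm (f (fst uv) - f (snd uv)) / d (fst uv) (snd uv)))
   * (SUP uv \<in> {(u, v). u \<in> V \<and> v \<in> V \<and> u \<noteq> v}. ereal (d (fst uv) (snd uv) / norm (f (fst uv) - f (snd uv))))"

text \<open>c_Y(M); it is +infinity when no injective map has finite distortion.\<close>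
definition c_dist :: "'a::real_normed_vector itself \<Rightarrow> 'v set \<Rightarrow> ('v \<Rightarrow> 'v \<Rightarrow> real) \<Rightarrow> ereal" where
  "c_dist _ V d = (INF f \<in> {f :: 'v \<Rightarrow> 'a. inj_on f V}. distortion V d f)"

text \<open>Edges of P_1: {r,b}, {b,t_i}, {t_i,s}.\<close>
datatype plabel = RB | BT nat | TS nat

text \<open>Internal vertices of P_1: b and t_i.\<close>
datatype pint = PB | PT nat

text \<open>Vertices: the two original endpoints R, S, and the internal vertices of the copy of P_1
  substituted for the edge with address es.\<close>
datatype pvert = R | S | Inner "plabel list" pint

text \<open>An edge of P_l is addressed by a list of l labels, the head being the most recent one.
  The parameter sigma chooses, for each edge es being replaced, whether r of the copy is
  identified with the first (False) or second (True) endpoint of es.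
  pend sigma es gives the two endpoints of edge es.\<close>
fun pend :: "(plabel list \<Rightarrow> bool) \<Rightarrow> plabel list \<Rightarrow> pvert \<times> pvert" where
  "pend \<sigma> [] = (R, S)"
| "pend \<sigma> (a # es) =
     (let uv = pend \<sigma> es;
          r = (if \<sigma> es then snd uv else fst uv);
          s = (if \<sigma> es then fst uv else snd uv)
      in (case a of RB \<Rightarrow> (r, Inner es PB)
                  | BT i \<Rightarrow> (Inner es PB, Inner es (PT i))
                  | TS i \<Rightarrow> (Inner es (PT i), s)))"

definition padj :: "(plabel list \<Rightarrow> bool) \<Rightarrow> nat \<Rightarrow> pvert \<Rightarrow> pvert \<Rightarrow> bool" where
  "padj \<sigma> l u v \<longleftrightarrow> (\<exists>es. length es = l \<and> (pend \<sigma> es = (u, v) \<or> pend \<sigma> es = (v, u)))"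

definition pverts :: "(plabel list \<Rightarrow> bool) \<Rightarrow> nat \<Rightarrow> pvert set" where
  "pverts \<sigma> l = {u. \<exists>v. padj \<sigma> l u v}"

definition pdist :: "(plabel list \<Rightarrow> bool) \<Rightarrow> nat \<Rightarrow> pvert \<Rightarrow> pvert \<Rightarrow> real" where
  "pdist \<sigma> l u v = real (LEAST n. (padj \<sigma> l ^^ n) u v)"

end

theory Submission
  imports Defs
begin


definition hstep :: "plabel \<Rightarrow> real \<Rightarrow> real \<Rightarrow> real \<times> real" where
  "hstep a hr hs = (case a of RB \<Rightarrow> (hr, hr + (hs - hr)/3)
                  | BT i \<Rightarrow> (hr + (hs - hr)/3, hr + 2*(hs - hr)/3)
                  | TS i \<Rightarrow> (hr + 2*(hs - hr)/3, hs))"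

fun hE :: "(plabel list \<Rightarrow> bool) \<Rightarrow> plabel list \<Rightarrow> real \<times> real" where
  "hE \<sigma> [] = (0, 1)"
| "hE \<sigma> (a # es) = (if \<sigma> es then hstep a (snd (hE \<sigma> es)) (fst (hE \<sigma> es))
       else hstep a (fst (hE \<sigma> es)) (snd (hE \<sigma> es)))"

fun hv :: "(plabel list \<Rightarrow> bool) \<Rightarrow> pvert \<Rightarrow> real" where
  "hv \<sigma> R = 0"
| "hv \<sigma> S = 1"
| "hv \<sigma> (Inner es PB) = snd (hE \<sigma> (RB # es))"
| "hv \<sigma> (Inner es (PT i)) = snd (hE \<sigma> (BT i # es))"

lemma hE_pend: "hE \<sigma> E = (hv \<sigma> (fst (pend \<sigma> E)), hv \<sigma> (snd (pend \<sigma> E)))"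
proof (induction E)
  case Nil then show ?case by simp
next
  case (Cons a E)
  show ?case using Cons
    by (cases a) (auto simp: Let_def hstep_def split: prod.splits)
qed

lemma hE_Cons_ex: "\<exists>hr hs t1 t2. ((hr = fst (hE \<sigma> E) \<and> hs = snd (hE \<sigma> E)) \<or> (hr = snd (hE \<sigma> E) \<and> hs = fst (hE \<sigma> E)))
   \<and> 0 \<le> t1 \<and> t1 \<le> 1 \<and> 0 \<le> t2 \<and> t2 \<le> 1 \<and> \<bar>t2 - t1\<bar> = 1/3
   \<and> hE \<sigma> (a # E) = (hr + t1 * (hs - hr), hr + t2 * (hs - hr))"
proof -
  define hr where "hr = (if \<sigma> E then snd (hE \<sigma> E) else fst (hE \<sigma> E))"
  define hs where "hs = (if \<sigma> E then fst (hE \<sigma> E) else snd (hE \<sigma> E))"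
  have sw: "(hr = fst (hE \<sigma> E) \<and> hs = snd (hE \<sigma> E)) \<or> (hr = snd (hE \<sigma> E) \<and> hs = fst (hE \<sigma> E))"
    unfolding hr_def hs_def by auto
  have h: "hE \<sigma> (a # E) = hstep a hr hs"
    unfolding hr_def hs_def by simp
  show ?thesis
  proof (cases a)
    case RB
    show ?thesis using sw h RB unfolding hstep_def by (intro exI[of _ hr] exI[of _ hs] exI[of _ 0] exI[of _ "1/3"]) auto
  next
    case (BT i)
    show ?thesis using sw h BT unfolding hstep_def by (intro exI[of _ hr] exI[of _ hs] exI[of _ "1/3"] exI[of _ "2/3"]) (auto simp: field_simps)
  next
    case (TS i)
    show ?thesis using sw h TS unfolding hstep_def by (intro exI[of _ hr] exI[of _ hs] exI[of _ "2/3"] exI[of _ "1"]) (auto simp: field_simps)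
  qed
qed

lemma hE_len: "\<bar>snd (hE \<sigma> E) - fst (hE \<sigma> E)\<bar> = (1/3) ^ length E"
proof (induction E)
  case Nil then show ?case by simp
next
  case (Cons a E)
  obtain hr hs t1 t2 where o: "(hr = fst (hE \<sigma> E) \<and> hs = snd (hE \<sigma> E)) \<or> (hr = snd (hE \<sigma> E) \<and> hs = fst (hE \<sigma> E))"
    "\<bar>t2 - t1\<bar> = 1/3" "hE \<sigma> (a # E) = (hr + t1 * (hs - hr), hr + t2 * (hs - hr))"
    using hE_Cons_ex[of \<sigma> E a] by blast
  have e: "\<bar>hs - hr\<bar> = (1/3) ^ length E" using Cons o(1) by (auto simp: abs_minus_commute)
  have "snd (hE \<sigma> (a # E)) - fst (hE \<sigma> (a # E)) = (t2 - t1) * (hs - hr)" using o(3) by (simp add: algebra_simps)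
  then have "\<bar>snd (hE \<sigma> (a # E)) - fst (hE \<sigma> (a # E))\<bar> = \<bar>t2 - t1\<bar> * \<bar>hs - hr\<bar>" by (simp add: abs_mult)
  then show ?case using e o(2) by simp
qed

lemma conv_in: "(m::real) \<le> x \<Longrightarrow> x \<le> M \<Longrightarrow> m \<le> y \<Longrightarrow> y \<le> M \<Longrightarrow> 0 \<le> t \<Longrightarrow> t \<le> 1 \<Longrightarrow>
   m \<le> x + t * (y - x) \<and> x + t * (y - x) \<le> M"
proof -
  assume a: "m \<le> x" "x \<le> M" "m \<le> y" "y \<le> M" "0 \<le> t" "t \<le> 1"
  have "x + t * (y - x) = (1 - t) * x + t * y" by (simp add: algebra_simps)
  moreover have "(1 - t) * m \<le> (1 - t) * x" "t * m \<le> t * y" "(1 - t) * x \<le> (1 - t) * M" "t * y \<le> t * M"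
    using a by (simp_all add: mult_left_mono)
  moreover have "(1 - t) * m + t * m = m" "(1 - t) * M + t * M = M" by (simp_all add: algebra_simps)
  ultimately show ?thesis by linarith
qed

definition isend :: "(plabel list \<Rightarrow> bool) \<Rightarrow> plabel list \<Rightarrow> pvert \<Rightarrow> bool" where
  "isend \<sigma> E x \<longleftrightarrow> x = fst (pend \<sigma> E) \<or> x = snd (pend \<sigma> E)"

lemma isend_Cons: "isend \<sigma> (a # E) x \<Longrightarrow> isend \<sigma> E x \<or> (\<exists>q. x = Inner E q)"
  by (cases a) (auto simp: isend_def Let_def split: prod.splits if_splits)

lemma lemA: "isend \<sigma> E (Inner es q) \<Longrightarrow> \<exists>pre a. E = pre @ a # es \<and> isend \<sigma> (a # es) (Inner es q)"
proof (induction E)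
  case Nil then show ?case by (simp add: isend_def)
next
  case (Cons a E)
  from isend_Cons[OF Cons.prems] show ?case
  proof
    assume "isend \<sigma> E (Inner es q)"
    from Cons.IH[OF this] obtain pre b where "E = pre @ b # es" "isend \<sigma> (b # es) (Inner es q)" by blast
    then show ?thesis by (intro exI[of _ "a # pre"] exI[of _ b]) simp
  next
    assume "\<exists>q'. Inner es q = Inner E q'"
    then have "es = E" by auto
    then show ?thesis using Cons.prems by (intro exI[of _ "[]"] exI[of _ a]) simp
  qed
qed

lemma lemA_len: "isend \<sigma> E (Inner es q) \<Longrightarrow> length es < length E"
  using lemA by fastforce

lemma lemB: "isend \<sigma> (pre @ E0) x \<Longrightarrow> isend \<sigma> E0 x \<or> (\<exists>es q pre'. x = Inner es q \<and> es = pre' @ E0)"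
proof (induction pre arbitrary: x)
  case Nil then show ?case by simp
next
  case (Cons a pre)
  from isend_Cons[of \<sigma> a "pre @ E0" x] Cons.prems show ?case
    using Cons.IH by auto
qed

lemma lemC: "min (fst (hE \<sigma> E0)) (snd (hE \<sigma> E0)) \<le> fst (hE \<sigma> (pre @ E0)) \<and>
   fst (hE \<sigma> (pre @ E0)) \<le> max (fst (hE \<sigma> E0)) (snd (hE \<sigma> E0)) \<and>
   min (fst (hE \<sigma> E0)) (snd (hE \<sigma> E0)) \<le> snd (hE \<sigma> (pre @ E0)) \<and>
   snd (hE \<sigma> (pre @ E0)) \<le> max (fst (hE \<sigma> E0)) (snd (hE \<sigma> E0))"
proof (induction pre)
  case Nil then show ?case by simp
next
  case (Cons a pre)
  obtain hr hs t1 t2 where o: "(hr = fst (hE \<sigma> (pre @ E0)) \<and> hs = snd (hE \<sigma> (pre @ E0))) \<or> (hr = snd (hE \<sigma> (pre @ E0)) \<and> hs = fst (hE \<sigma> (pre @ E0)))"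
    "0 \<le> t1" "t1 \<le> 1" "0 \<le> t2" "t2 \<le> 1" "hE \<sigma> (a # pre @ E0) = (hr + t1 * (hs - hr), hr + t2 * (hs - hr))"
    using hE_Cons_ex[of \<sigma> "pre @ E0" a] by blast
  let ?m = "min (fst (hE \<sigma> E0)) (snd (hE \<sigma> E0))" and ?M = "max (fst (hE \<sigma> E0)) (snd (hE \<sigma> E0))"
  have b: "?m \<le> hr" "hr \<le> ?M" "?m \<le> hs" "hs \<le> ?M" using Cons o(1) by auto
  show ?case using o(6) conv_in[OF b o(2,3)] conv_in[OF b o(4,5)] by simp
qed


lemma padj_sym: "padj \<sigma> l u v \<Longrightarrow> padj \<sigma> l v u"
  unfolding padj_def by blast

lemma relpowp_padj_sym: "(padj \<sigma> l ^^ n) u v \<Longrightarrow> (padj \<sigma> l ^^ n) v u"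
proof (induction n arbitrary: v)
  case 0 then show ?case by simp
next
  case (Suc n)
  from Suc.prems obtain w where "(padj \<sigma> l ^^ n) u w" "padj \<sigma> l w v" by (rule relpowp_Suc_E)
  then show ?case using Suc.IH padj_sym relpowp_Suc_I2 by metis
qed

lemma pend_children:
  "pend \<sigma> (RB # E) = ((if \<sigma> E then snd (pend \<sigma> E) else fst (pend \<sigma> E)), Inner E PB)"
  "pend \<sigma> (BT i # E) = (Inner E PB, Inner E (PT i))"
  "pend \<sigma> (TS i # E) = (Inner E (PT i), (if \<sigma> E then fst (pend \<sigma> E) else snd (pend \<sigma> E)))"
  by (simp_all add: Let_def)

lemma conn: "length E + j = l \<Longrightarrow> (padj \<sigma> l ^^ (3^j)) (fst (pend \<sigma> E)) (snd (pend \<sigma> E))"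
proof (induction j arbitrary: E)
  case 0
  then have "padj \<sigma> l (fst (pend \<sigma> E)) (snd (pend \<sigma> E))" unfolding padj_def by auto
  then show ?case by (metis power_0 relpowp_1)
next
  case (Suc j)
  define r where "r = (if \<sigma> E then snd (pend \<sigma> E) else fst (pend \<sigma> E))"
  define s where "s = (if \<sigma> E then fst (pend \<sigma> E) else snd (pend \<sigma> E))"
  have l: "length (c # E) + j = l" for c using Suc.prems by simp
  have 1: "(padj \<sigma> l ^^ (3^j)) r (Inner E PB)" using Suc.IH[OF l[of RB]] unfolding r_def pend_children by simp
  have 2: "(padj \<sigma> l ^^ (3^j)) (Inner E PB) (Inner E (PT 0))" using Suc.IH[OF l[of "BT 0"]] unfolding pend_children by simp
  have 3: "(padj \<sigma> l ^^ (3^j)) (Inner E (PT 0)) s" using Suc.IH[OF l[of "TS 0"]] unfolding s_def pend_children by simp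
  have "(padj \<sigma> l ^^ (3^j + 3^j + 3^j)) r s" using relpowp_trans[OF relpowp_trans[OF 1 2] 3] .
  moreover have "(3::nat)^j + 3^j + 3^j = 3^Suc j" by simp
  ultimately have rs: "(padj \<sigma> l ^^ (3^Suc j)) r s" by metis
  show ?case
  proof (cases "\<sigma> E")
    case True
    then show ?thesis using relpowp_padj_sym[OF rs] unfolding r_def s_def by simp
  next
    case False
    then show ?thesis using rs unfolding r_def s_def by simp
  qed
qed

lemma path_bound:
  assumes "\<forall>E. length E = l \<longrightarrow> \<bar>\<phi> (fst (pend \<sigma> E)) - \<phi> (snd (pend \<sigma> E))\<bar> \<le> \<epsilon>"
  shows "(padj \<sigma> l ^^ n) u v \<Longrightarrow> \<bar>\<phi> u - \<phi> v\<bar> \<le> real n * \<epsilon>"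
proof (induction n arbitrary: v)
  case 0 then show ?case by simp
next
  case (Suc n)
  from Suc.prems obtain w where w: "(padj \<sigma> l ^^ n) u w" "padj \<sigma> l w v" by (rule relpowp_Suc_E)
  from w(2) obtain E where E: "length E = l" "pend \<sigma> E = (w, v) \<or> pend \<sigma> E = (v, w)" unfolding padj_def by blast
  have "\<bar>\<phi> w - \<phi> v\<bar> \<le> \<epsilon>" using assms E by (auto simp: abs_minus_commute)
  then show ?case using Suc.IH[OF w(1)] by (simp add: algebra_simps)
qed

lemma pdist_lower:
  assumes "\<forall>E. length E = l \<longrightarrow> \<bar>\<phi> (fst (pend \<sigma> E)) - \<phi> (snd (pend \<sigma> E))\<bar> \<le> \<epsilon>"
    and "(padj \<sigma> l ^^ n) u v"
  shows "\<bar>\<phi> u - \<phi> v\<bar> \<le> pdist \<sigma> l u v * \<epsilon>"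
proof -
  have "(padj \<sigma> l ^^ (LEAST n. (padj \<sigma> l ^^ n) u v)) u v" by (rule LeastI[of "\<lambda>n. (padj \<sigma> l ^^ n) u v", OF assms(2)])
  from path_bound[OF assms(1) this] show ?thesis unfolding pdist_def .
qed

lemma pdist_adj: "padj \<sigma> l u v \<Longrightarrow> pdist \<sigma> l u v \<le> 1"
proof -
  assume "padj \<sigma> l u v"
  then have "(padj \<sigma> l ^^ 1) u v" by (metis relpowp_1)
  then have "(LEAST n. (padj \<sigma> l ^^ n) u v) \<le> 1" by (rule Least_le)
  then show ?thesis unfolding pdist_def by simp
qed

lemma isend_pverts: assumes "isend \<sigma> E x" "length E \<le> l" shows "x \<in> pverts \<sigma> l"
proof -
  have c: "(padj \<sigma> l ^^ Suc (3^(l - length E) - 1)) (fst (pend \<sigma> E)) (snd (pend \<sigma> E))"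
    using conn[of E "l - length E" l \<sigma>] assms(2) by simp
  obtain w where "padj \<sigma> l (fst (pend \<sigma> E)) w" using relpowp_Suc_D2[OF c] by blast
  moreover obtain w' where "padj \<sigma> l (snd (pend \<sigma> E)) w'" using relpowp_Suc_D2[OF relpowp_padj_sym[OF c]] by blast
  ultimately show ?thesis using assms(1) unfolding isend_def pverts_def by blast
qed

lemma hv_lip: "\<bar>hv \<sigma> (fst (pend \<sigma> E)) - hv \<sigma> (snd (pend \<sigma> E))\<bar> = (1/3) ^ length E"
  using hE_len[of \<sigma> E] hE_pend[of \<sigma> E] by (simp add: abs_minus_commute)


definition insub :: "plabel list \<Rightarrow> nat \<Rightarrow> pvert \<Rightarrow> bool" where
  "insub es i x \<longleftrightarrow> (\<exists>es' q pre. x = Inner es' q \<and> (es' = pre @ BT i # es \<or> es' = pre @ TS i # es))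
     \<or> x = Inner es (PT i)"

definition psi :: "(plabel list \<Rightarrow> bool) \<Rightarrow> plabel list \<Rightarrow> nat \<Rightarrow> pvert \<Rightarrow> real" where
  "psi \<sigma> es i x = (if insub es i x then (1/3)^(Suc (length es)) - \<bar>hv \<sigma> x - hv \<sigma> (Inner es (PT i))\<bar> else 0)"

lemma not_insub_short: "length es' \<le> length es \<Longrightarrow> x = Inner es' q \<Longrightarrow> insub es i x \<Longrightarrow> es' = es \<and> q = PT i"
  unfolding insub_def by (auto dest: arg_cong[of _ _ length])

lemma not_insub_RS: "\<not> insub es i R" "\<not> insub es i S"
  unfolding insub_def by auto

lemma isend_short: "isend \<sigma> es x \<Longrightarrow> \<not> insub es i x"
proof
  assume a: "isend \<sigma> es x" "insub es i x"
  show False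
  proof (cases x)
    case (Inner es' q)
    have "length es' < length es" using lemA_len a(1) Inner by blast
    then show False using not_insub_short[of es' es x q i] a(2) Inner by auto
  qed (use a not_insub_RS in auto)
qed

lemma psi_formula:
  assumes "E = pre @ c # es" "c = BT i \<or> c = TS i" "isend \<sigma> E x"
  shows "psi \<sigma> es i x = (1/3)^(Suc (length es)) - \<bar>hv \<sigma> x - hv \<sigma> (Inner es (PT i))\<bar>"
proof (cases "insub es i x")
  case True then show ?thesis unfolding psi_def by simp
next
  case False
  let ?t = "Inner es (PT i)"
  have "isend \<sigma> (c # es) x"
    using lemB[of \<sigma> pre "c # es" x] assms False unfolding insub_def by blast
  then have "(x = Inner es PB \<and> c = BT i) \<or> (x = snd (pend \<sigma> (TS i # es)) \<and> c = TS i)"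
    using assms(2) False unfolding isend_def insub_def by (auto simp: Let_def)
  moreover have "\<bar>hv \<sigma> (Inner es PB) - hv \<sigma> ?t\<bar> = (1/3)^(Suc (length es))"
    using hv_lip[of \<sigma> "BT i # es"] by (simp add: Let_def)
  moreover have "\<bar>hv \<sigma> (snd (pend \<sigma> (TS i # es))) - hv \<sigma> ?t\<bar> = (1/3)^(Suc (length es))"
    using hv_lip[of \<sigma> "TS i # es"] by (simp add: Let_def abs_minus_commute)
  ultimately show ?thesis unfolding psi_def using False by auto
qed

lemma psi_zero:
  assumes "\<not> (\<exists>pre. E = pre @ BT i # es \<or> E = pre @ TS i # es)" "isend \<sigma> E x"
  shows "psi \<sigma> es i x = 0"
proof -
  have "\<not> insub es i x"
  proof
    assume "insub es i x"
    then consider (a) es' q pre where "x = Inner es' q" "es' = pre @ BT i # es \<or> es' = pre @ TS i # es"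
      | (b) "x = Inner es (PT i)" unfolding insub_def by blast
    then show False
    proof cases
      case a
      then obtain pre2 c where "E = pre2 @ c # es'" using lemA assms(2) by blast
      then show False using a(2) assms(1) by (metis append.assoc append_Cons)
    next
      case b
      then obtain pre2 c where e: "E = pre2 @ c # es" "isend \<sigma> (c # es) (Inner es (PT i))" using lemA assms(2) by blast
      show False
      proof (cases c)
        case RB
        then have "isend \<sigma> es (Inner es (PT i))" using e(2) unfolding isend_def by (auto simp: Let_def split: if_splits)
        then show False using lemA_len by blast
      next
        case (BT j)
        then have "j = i" using e(2) unfolding isend_def by (auto simp: Let_def)
        then show False using e(1) BT assms(1) by blast
      next
        case (TS j)
        have "isend \<sigma> es (Inner es (PT i))" if "j \<noteq> i" using e(2) TS that unfolding isend_def by (auto simp: Let_def split: if_splits)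
        then have "j = i" using lemA_len by blast
        then show False using e(1) TS assms(1) by blast
      qed
    qed
  qed
  then show ?thesis unfolding psi_def by simp
qed

lemma psi_lip: "\<bar>psi \<sigma> es i (fst (pend \<sigma> E)) - psi \<sigma> es i (snd (pend \<sigma> E))\<bar> \<le> (1/3) ^ length E"
proof (cases "\<exists>pre. E = pre @ BT i # es \<or> E = pre @ TS i # es")
  case True
  then obtain pre c where pc: "E = pre @ c # es" "c = BT i \<or> c = TS i" by blast
  let ?t = "hv \<sigma> (Inner es (PT i))"
  have "psi \<sigma> es i (fst (pend \<sigma> E)) = (1/3)^(Suc (length es)) - \<bar>hv \<sigma> (fst (pend \<sigma> E)) - ?t\<bar>"
    using psi_formula[OF pc] unfolding isend_def by blast
  moreover have "psi \<sigma> es i (snd (pend \<sigma> E)) = (1/3)^(Suc (length es)) - \<bar>hv \<sigma> (snd (pend \<sigma> E)) - ?t\<bar>"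
    using psi_formula[OF pc] unfolding isend_def by blast
  ultimately show ?thesis using hv_lip[of \<sigma> E] by simp
next
  case False
  then show ?thesis using psi_zero[OF False] unfolding isend_def by simp
qed

lemma psi_vals: "psi \<sigma> es i (Inner es (PT i)) = (1/3)^(Suc (length es))"
   "j \<noteq> i \<Longrightarrow> psi \<sigma> es i (Inner es (PT j)) = 0"
  unfolding psi_def insub_def by (auto dest: arg_cong[of _ _ length])

lemma dist_RS: "pdist \<sigma> l R S \<ge> 3 ^ l"
proof -
  have p: "(padj \<sigma> l ^^ (3^l)) R S" using conn[of "[]" l l \<sigma>] by simp
  have "\<bar>hv \<sigma> R - hv \<sigma> S\<bar> \<le> pdist \<sigma> l R S * (1/3)^l"
    by (rule pdist_lower[OF _ p]) (simp add: hv_lip)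
  then have "1 \<le> pdist \<sigma> l R S * (1/3)^l" by simp
  then have "3^l * 1 \<le> 3^l * (pdist \<sigma> l R S * (1/3)^l)" by (intro mult_left_mono) auto
  also have "\<dots> = pdist \<sigma> l R S" by (simp add: power_one_over field_simps)
  finally show ?thesis by simp
qed

lemma dist_tt:
  assumes "length es < l" "i \<noteq> j"
  shows "pdist \<sigma> l (Inner es (PT i)) (Inner es (PT j)) \<ge> 3 ^ (l - length es - 1)"
proof -
  let ?k = "length es"
  have l1: "length (c # es) + (l - ?k - 1) = l" for c using assms(1) by simp
  have p1: "(padj \<sigma> l ^^ (3^(l - ?k - 1))) (Inner es (PT i)) (Inner es PB)"
    using relpowp_padj_sym[OF conn[OF l1[of "BT i"], of \<sigma>]] by (simp add: Let_def)
  have p2: "(padj \<sigma> l ^^ (3^(l - ?k - 1))) (Inner es PB) (Inner es (PT j))"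
    using conn[OF l1[of "BT j"], of \<sigma>] by (simp add: Let_def)
  have p: "(padj \<sigma> l ^^ (3^(l - ?k - 1) + 3^(l - ?k - 1))) (Inner es (PT i)) (Inner es (PT j))"
    using relpowp_trans[OF p1 p2] .
  have "\<bar>psi \<sigma> es i (Inner es (PT i)) - psi \<sigma> es i (Inner es (PT j))\<bar> \<le> pdist \<sigma> l (Inner es (PT i)) (Inner es (PT j)) * (1/3)^l"
    by (rule pdist_lower[OF _ p]) (metis psi_lip)
  then have h: "(1/3)^(Suc ?k) \<le> pdist \<sigma> l (Inner es (PT i)) (Inner es (PT j)) * (1/3)^l"
    using psi_vals(1)[where \<sigma>=\<sigma> and es=es and i=i] psi_vals(2)[where j=j and i=i and \<sigma>=\<sigma> and es=es] assms(2) by simp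
  have e: "l = Suc ?k + (l - ?k - 1)" using assms(1) by simp
  have "(1/3::real)^(Suc ?k) = (1/3)^l * 3^(l - ?k - 1)"
    by (subst e) (simp add: power_add power_one_over field_simps)
  with h have "(1/3)^l * 3^(l - ?k - 1) \<le> (1/3)^l * pdist \<sigma> l (Inner es (PT i)) (Inner es (PT j))"
    by (simp add: mult.commute)
  then show ?thesis by (rule mult_left_le_imp_le) simp
qed



locale nf = fixes N :: "'a::real_vector \<Rightarrow> real" assumes nf: "is_norm_fun N"
begin
lemma tri: "N (x + y) \<le> N x + N y" using nf unfolding is_norm_fun_def by blast
lemma hom: "N (c *\<^sub>R x) = \<bar>c\<bar> * N x" using nf unfolding is_norm_fun_def by blast
lemma zero: "N 0 = 0" using hom[of 0 0] by simp
lemma neg: "N (- x) = N x" using hom[of "-1" x] by simp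
lemma nonneg: "N x \<ge> 0"
proof -
  have "N (x + - x) \<le> N x + N (- x)" by (rule tri)
  then show ?thesis by (simp add: zero neg)
qed
lemma comm: "N (x - y) = N (y - x)" using neg[of "x - y"] by simp
lemma tri3: "N (x - z) \<le> N (x - y) + N (y - z)" using tri[of "x - y" "y - z"] by simp
end

lemma mod_step:
  fixes N :: "'a::real_vector \<Rightarrow> real" and w :: "nat \<Rightarrow> 'a"
  assumes nfN: "is_norm_fun N" and c: "c > 0"
    and bp: "\<forall>t. 0 < t \<and> t \<le> 2 \<longrightarrow> beta_modulus N t \<ge> ereal (c * t powr p)"
    and mu: "\<mu> > 0" and s0: "s0 > 0"
    and h1: "\<forall>n. N (w n - u) \<le> \<mu>" and h2: "\<forall>n. N (v - w n) \<le> \<mu>"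
    and sep: "\<forall>n m. n \<noteq> m \<longrightarrow> s0 \<le> N (w n - w m)"
  shows "N (v - u) \<le> \<mu> * (2 - c * (s0/\<mu>) powr p)"
proof -
  interpret nf N by (unfold_locales) (rule nfN)
  define \<tau> where "\<tau> = s0 / \<mu>"
  have tpos: "\<tau> > 0" using mu s0 by (simp add: \<tau>_def)
  have "s0 \<le> N (w 0 - w 1)" using sep by simp
  also have "\<dots> \<le> N (w 0 - u) + N (u - w 1)" by (rule tri3)
  also have "\<dots> \<le> 2 * \<mu>" using h1 comm[of u "w 1"] by (smt (verit))
  finally have "\<tau> \<le> 2" using mu by (simp add: \<tau>_def field_simps)
  with bp tpos have bm: "beta_modulus N \<tau> \<ge> ereal (c * \<tau> powr p)" by blast
  define x where "x = (1/\<mu>) *\<^sub>R (v - w 0)"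
  define y where "y = (\<lambda>n. (1/\<mu>) *\<^sub>R (w (Suc n) - u))"
  have Ns: "N ((1/\<mu>) *\<^sub>R z) = N z / \<mu>" for z using hom[of "1/\<mu>" z] mu by simp
  have xb: "x \<in> unit_ballN N" unfolding unit_ballN_def mem_Collect_eq x_def Ns using h2 mu by simp
  have yb: "range y \<subseteq> unit_ballN N" unfolding unit_ballN_def y_def using h1 mu by (auto simp only: Ns mem_Collect_eq) (simp add: field_simps)
  have "sepN N y \<ge> ereal \<tau>" unfolding sepN_def
  proof (rule INF_greatest)
    fix mn :: "nat \<times> nat" assume "mn \<in> {(m, n). m \<noteq> n}"
    then obtain m n where mn: "mn = (m, n)" "m \<noteq> n" by auto
    have "y m - y n = (1/\<mu>) *\<^sub>R (w (Suc m) - w (Suc n))" unfolding y_def by (simp add: algebra_simps)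
    then have "N (y m - y n) = N (w (Suc m) - w (Suc n)) / \<mu>" by (simp only: Ns)
    moreover have "s0 \<le> N (w (Suc m) - w (Suc n))" using sep mn by simp
    ultimately have "\<tau> \<le> N (y m - y n)" using mu by (simp add: \<tau>_def divide_right_mono)
    then show "ereal \<tau> \<le> ereal (N (y (fst mn) - y (snd mn)))" using mn by simp
  qed
  then have mem: "(x, y) \<in> {(x, y). x \<in> unit_ballN N \<and> range y \<subseteq> unit_ballN N \<and> sepN N y \<ge> ereal \<tau>}"
    using xb yb by simp
  define Sg where "Sg = (SUP xy \<in> {(x, y). x \<in> unit_ballN N \<and> range y \<subseteq> unit_ballN N
        \<and> sepN N y \<ge> ereal \<tau>}. (INF n. ereal (N (fst xy + snd xy n) / 2)))"
  have "ereal (N (v - u) / \<mu> - 1) \<le> (INF n. ereal (N (x + y n) / 2))"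
  proof (rule INF_greatest)
    fix n
    have e: "x + y n = (1/\<mu>) *\<^sub>R ((v - w 0) + (w (Suc n) - u))" unfolding x_def y_def by (simp add: algebra_simps)
    have e2: "(v - u) + (v - u) = ((v - w 0) + (w (Suc n) - u)) + ((w 0 - u) + (v - w (Suc n)))" by (simp add: algebra_simps)
    have "N ((v - u) + (v - u)) \<le> N ((v - w 0) + (w (Suc n) - u)) + (N (w 0 - u) + N (v - w (Suc n)))"
      unfolding e2 using tri[of "(v - w 0) + (w (Suc n) - u)"] tri[of "w 0 - u"] by smt
    moreover have "N ((v - u) + (v - u)) = 2 * N (v - u)" using hom[of 2 "v - u"] by (simp add: scaleR_2)
    moreover have "N (x + y n) = N ((v - w 0) + (w (Suc n) - u)) / \<mu>" unfolding e Ns ..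
    ultimately have "2 * N (v - u) \<le> \<mu> * N (x + y n) + 2 * \<mu>" using h1 h2 mu by (simp add: field_simps) smt
    then have "N (v - u) / \<mu> - 1 \<le> N (x + y n) / 2" using mu by (simp add: field_simps)
    then show "ereal (N (v - u) / \<mu> - 1) \<le> ereal (N (x + y n) / 2)" by simp
  qed
  also have "\<dots> \<le> Sg" unfolding Sg_def by (rule SUP_upper2[OF mem]) simp
  finally have lo: "ereal (N (v - u) / \<mu> - 1) \<le> Sg" .
  have hi: "ereal (c * \<tau> powr p) \<le> 1 - Sg" using bm unfolding beta_modulus_def Sg_def by simp
  have "N (v - u) / \<mu> - 1 \<le> 1 - c * \<tau> powr p"
  proof (cases Sg)
    case (real r)
    have "(1::ereal) - ereal r = ereal (1 - r)" by (simp add: one_ereal_def)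
    then have "c * \<tau> powr p \<le> 1 - r" using hi real by simp
    moreover have "N (v - u) / \<mu> - 1 \<le> r" using lo real by simp
    ultimately show ?thesis by linarith
  next
    case PInf
    have "(1::ereal) - \<infinity> = - \<infinity>" by (simp add: one_ereal_def)
    then show ?thesis using hi PInf by simp
  next
    case MInf
    then show ?thesis using lo by simp
  qed
  then show ?thesis using mu by (simp add: \<tau>_def field_simps)
qed



lemma main_ind:
  fixes N :: "'a::real_vector \<Rightarrow> real" and f :: "pvert \<Rightarrow> 'a"
  assumes nfN: "is_norm_fun N" and c: "c > 0" and p: "p > 1"
    and bp: "\<forall>t. 0 < t \<and> t \<le> 2 \<longrightarrow> beta_modulus N t \<ge> ereal (c * t powr p)"
    and Lo: "Lo > 0" and U: "U > 0"
    and H1: "\<forall>E. length E = l \<longrightarrow> N (f (snd (pend \<sigma> E)) - f (fst (pend \<sigma> E))) \<le> U"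
    and H2: "\<forall>E i j. length E < l \<longrightarrow> i \<noteq> j \<longrightarrow> Lo * 3^(l - length E - 1) \<le> N (f (Inner E (PT i)) - f (Inner E (PT j)))"
  shows "length E + j = l \<Longrightarrow> N (f (snd (pend \<sigma> E)) - f (fst (pend \<sigma> E)))
           \<le> 3^j * (U - real j * (c/3 * Lo powr p * U powr (1 - p)))"
proof (induction j arbitrary: E)
  case 0 then show ?case using H1 by simp
next
  case (Suc j)
  interpret nf N by (unfold_locales) (rule nfN)
  define \<delta> where "\<delta> = c/3 * Lo powr p * U powr (1 - p)"
  have \<delta>0: "\<delta> \<ge> 0" using c unfolding \<delta>_def by simp
  define m where "m = U - real j * \<delta>"
  have mU: "m \<le> U" using \<delta>0 unfolding m_def by simp
  define r where "r = (if \<sigma> E then snd (pend \<sigma> E) else fst (pend \<sigma> E))"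
  define s where "s = (if \<sigma> E then fst (pend \<sigma> E) else snd (pend \<sigma> E))"
  define w where "w = (\<lambda>n. f (Inner E (PT n)))"
  have l: "length (c' # E) + j = l" for c' using Suc.prems by simp
  have 1: "N (f (Inner E PB) - f r) \<le> 3^j * m"
    using Suc.IH[OF l[of RB]] unfolding r_def m_def \<delta>_def pend_children by simp
  have 2: "N (w n - f (Inner E PB)) \<le> 3^j * m" for n
    using Suc.IH[OF l[of "BT n"]] unfolding w_def m_def \<delta>_def pend_children by simp
  have 3: "N (f s - w n) \<le> 3^j * m" for n
    using Suc.IH[OF l[of "TS n"]] unfolding s_def w_def m_def \<delta>_def pend_children by simp
  have lj: "l - length E - 1 = j" using Suc.prems by simp
  have sep: "\<forall>n n'. n \<noteq> n' \<longrightarrow> Lo * 3^j \<le> N (w n - w n')"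
  proof (intro allI impI)
    fix n n' :: nat assume "n \<noteq> n'"
    moreover have "length E < l" using Suc.prems by simp
    ultimately show "Lo * 3^j \<le> N (w n - w n')" using H2[rule_format, of E n n'] lj unfolding w_def by simp
  qed
  have "Lo * 3^j \<le> N (w 0 - w 1)" using sep by simp
  also have "\<dots> \<le> N (w 0 - f (Inner E PB)) + N (f (Inner E PB) - w 1)" by (rule tri3)
  also have "\<dots> \<le> 2 * (3^j * m)" using 2[of 0] 2[of 1] comm[of "f (Inner E PB)" "w 1"] by simp
  finally have "Lo * 3^j \<le> 2 * (3^j * m)" .
  moreover have "0 < Lo * 3^j" using Lo by simp
  ultimately have "0 < 3^j * m" by linarith
  then have mpos: "m > 0" by (simp add: zero_less_mult_iff)
  have mu: "3^j * m > 0" using mpos by simp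
  have s0: "Lo * 3^j > 0" using Lo by simp
  have ms: "N (f s - f (Inner E PB)) \<le> (3^j * m) * (2 - c * ((Lo * 3^j) / (3^j * m)) powr p)"
    by (rule mod_step[OF nfN c bp mu s0]) (use 2 3 sep in auto)
  have q: "(Lo * 3^j) / (3^j * m) = Lo / m" by simp
  have "N (f s - f r) \<le> N (f s - f (Inner E PB)) + N (f (Inner E PB) - f r)" by (rule tri3)
  also have "\<dots> \<le> 3^j * (3 * m - c * m * (Lo / m) powr p)"
    using ms 1 unfolding q by (simp add: algebra_simps)
  also have "\<dots> \<le> 3^j * (3 * (m - \<delta>))"
  proof -
    have "m * (Lo / m) powr p = Lo powr p * m powr (1 - p)"
    proof -
      have "m powr (1 - p) = m / m powr p" using mpos by (simp add: powr_diff)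
      then show ?thesis by (simp add: powr_divide)
    qed
    moreover have "U powr (1 - p) \<le> m powr (1 - p)" using powr_mono2'[of "1 - p" m U] p mpos mU by simp
    then have "Lo powr p * U powr (1 - p) \<le> Lo powr p * m powr (1 - p)" by (simp add: mult_left_mono)
    ultimately have "c * (Lo powr p * U powr (1 - p)) \<le> c * (m * (Lo / m) powr p)" using c by (simp add: mult_left_mono)
    then have "3 * \<delta> \<le> c * m * (Lo / m) powr p" unfolding \<delta>_def by (simp add: algebra_simps)
    then show ?thesis by simp
  qed
  also have "\<dots> = 3^Suc j * (U - real (Suc j) * \<delta>)" unfolding m_def by (simp add: algebra_simps)
  finally have fin: "N (f s - f r) \<le> 3^Suc j * (U - real (Suc j) * \<delta>)" .
  have "N (f (snd (pend \<sigma> E)) - f (fst (pend \<sigma> E))) = N (f s - f r)"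
    unfolding r_def s_def using comm by auto
  then show ?case using fin unfolding \<delta>_def by simp
qed



lemma final_alg:
  fixes U Lo c p l :: real
  assumes U: "U > 0" and Lo: "Lo > 0" and c: "c > 0" and p: "p > 1" and l: "l \<ge> 0"
    and h: "Lo \<le> U - l * (c/3 * Lo powr p * U powr (1 - p))"
  shows "(c/3) powr (1/p) * l powr (1/p) \<le> U / Lo"
proof -
  have "l * (c/3 * Lo powr p * U powr (1 - p)) \<le> U" using h Lo by linarith
  moreover have "U powr (1 - p) = U / U powr p" using U by (simp add: powr_diff)
  ultimately have "l * (c/3) * Lo powr p * U / U powr p \<le> U" by (simp add: algebra_simps)
  then have "l * (c/3) * Lo powr p * U \<le> U * U powr p" using U by (simp add: field_simps)
  then have "U * (l * (c/3) * Lo powr p) \<le> U * U powr p" by (simp add: algebra_simps)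
  then have "l * (c/3) * Lo powr p \<le> U powr p" using U by simp
  then have "l * (c/3) \<le> U powr p / Lo powr p" using Lo by (simp add: field_simps)
  also have "\<dots> = (U / Lo) powr p" by (simp add: powr_divide)
  finally have k: "(c/3) * l \<le> (U / Lo) powr p" by (simp add: mult.commute)
  have "(c/3) powr (1/p) * l powr (1/p) = ((c/3) * l) powr (1/p)" by (rule powr_mult[symmetric])
  also have "\<dots> \<le> ((U / Lo) powr p) powr (1/p)" using k c l p by (intro powr_mono2) auto
  also have "\<dots> = U / Lo" using p U Lo by (simp add: powr_powr)
  finally show ?thesis .
qed

theorem theorem4:
  fixes p :: real and N :: "'a::banach \<Rightarrow> real"
  assumes "1 < p"
    and "equivalent_norm N"
    and "beta_power_type N p"
  shows "\<exists>C>0. \<forall>\<sigma> l. l \<ge> 1 \<longrightarrow>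
           c_dist TYPE('a) (pverts \<sigma> l) (pdist \<sigma> l) \<ge> ereal (C * real l powr (1 / p))"
proof -
  have p: "p > 1" by fact
  obtain a b where nfN: "is_norm_fun N" and a: "a > 0" and b: "b > 0"
    and ab: "\<And>x. a * norm x \<le> N x \<and> N x \<le> b * norm x"
    using assms(2) unfolding equivalent_norm_def by blast
  obtain c where c: "c > 0" and bp: "\<forall>t. 0 < t \<and> t \<le> 2 \<longrightarrow> beta_modulus N t \<ge> ereal (c * t powr p)"
    using assms(3) unfolding beta_power_type_def by blast
  interpret nf N by (unfold_locales) (rule nfN)
  define C where "C = (a / b) * (c/3) powr (1/p)"
  have Cpos: "C > 0" unfolding C_def using a b c by simp
  have main: "c_dist TYPE('a) (pverts \<sigma> l) (pdist \<sigma> l) \<ge> ereal (C * real l powr (1 / p))" if l1: "l \<ge> 1" for \<sigma> l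
  proof -
    define V where "V = pverts \<sigma> l"
    define d where "d = pdist \<sigma> l"
    define P where "P = {(u, v). u \<in> V \<and> v \<in> V \<and> u \<noteq> v}"
    show ?thesis unfolding c_dist_def
    proof (rule INF_greatest)
      fix f :: "pvert \<Rightarrow> 'a" assume "f \<in> {f. inj_on f (pverts \<sigma> l)}"
      then have inj: "inj_on f V" unfolding V_def by simp
      define A where "A = (SUP uv \<in> P. ereal (norm (f (fst uv) - f (snd uv)) / d (fst uv) (snd uv)))"
      define B where "B = (SUP uv \<in> P. ereal (d (fst uv) (snd uv) / norm (f (fst uv) - f (snd uv))))"
      have dis: "distortion (pverts \<sigma> l) (pdist \<sigma> l) f = A * B"
        unfolding distortion_def A_def B_def P_def V_def d_def by simp
      have Au: "ereal (norm (f u - f v) / d u v) \<le> A" if "(u, v) \<in> P" for u v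
        unfolding A_def using that by (force intro: SUP_upper2)
      have Bu: "ereal (d u v / norm (f u - f v)) \<le> B" if "(u, v) \<in> P" for u v
        unfolding B_def using that by (force intro: SUP_upper2)
      have RV: "R \<in> V" "S \<in> V" unfolding V_def using isend_pverts[of \<sigma> "[]" _ l] by (auto simp: isend_def)
      have RSP: "(R, S) \<in> P" using RV unfolding P_def by simp
      have dRS: "d R S \<ge> 3 ^ l" unfolding d_def by (rule dist_RS)
      have dRSpos: "d R S > 0" using dRS by (smt (verit) zero_less_power)
      have fRS: "norm (f R - f S) > 0" using inj RV by (auto dest: inj_onD)
      have Apos: "A > 0" using Au[OF RSP] dRSpos fRS by (smt (verit) divide_pos_pos ereal_less(2) order_less_le_trans zero_ereal_def)
      have Bpos: "B > 0" using Bu[OF RSP] dRSpos fRS by (smt (verit) divide_pos_pos ereal_less(2) order_less_le_trans zero_ereal_def)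
      show "ereal (C * real l powr (1 / p)) \<le> distortion (pverts \<sigma> l) (pdist \<sigma> l) f"
      proof (cases A)
        case PInf
        then show ?thesis using Bpos dis by auto
      next
        case MInf
        then show ?thesis using Apos dis by auto
      next
        case (real A')
        note Ar = real
        show ?thesis
        proof (cases B)
          case PInf
          then show ?thesis using Apos dis by auto
        next
          case MInf
          then show ?thesis using Bpos dis by auto
        next
          case (real B')
          have A'pos: "A' > 0" using Apos Ar by simp
          have B'pos: "B' > 0" using Bpos real by simp
          define U where "U = b * A'"
          define Lo where "Lo = a / B'"
          have Upos: "U > 0" unfolding U_def using b A'pos by simp
          have Lopos: "Lo > 0" unfolding Lo_def using a B'pos by simp
          have lowb: "Lo * d u v \<le> N (f u - f v)" if "(u, v) \<in> P" "d u v > 0" for u v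
          proof -
            have nz: "norm (f u - f v) > 0" using that(1) inj unfolding P_def by (auto dest: inj_onD)
            have "d u v / norm (f u - f v) \<le> B'" using Bu[OF that(1)] real by simp
            then have "d u v \<le> B' * norm (f u - f v)" using nz by (simp add: field_simps)
            then have "d u v / B' \<le> norm (f u - f v)" using B'pos by (simp add: field_simps)
            then have "a * (d u v / B') \<le> a * norm (f u - f v)" using a by (intro mult_left_mono) auto
            also have "\<dots> \<le> N (f u - f v)" using ab by blast
            finally show ?thesis unfolding Lo_def by simp
          qed
          have H1: "\<forall>E. length E = l \<longrightarrow> N (f (snd (pend \<sigma> E)) - f (fst (pend \<sigma> E))) \<le> U"
          proof (intro allI impI)
            fix E :: "plabel list" assume lE: "length E = l"
            define u where "u = fst (pend \<sigma> E)"
            define v where "v = snd (pend \<sigma> E)"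
            show "N (f (snd (pend \<sigma> E)) - f (fst (pend \<sigma> E))) \<le> U"
            proof (cases "u = v")
              case True
              then show ?thesis using Upos zero unfolding u_def v_def by simp
            next
              case False
              have uvV: "u \<in> V" "v \<in> V" unfolding V_def u_def v_def using isend_pverts[of \<sigma> E _ l] lE
                by (auto simp: isend_def)
              have adj: "padj \<sigma> l v u" unfolding padj_def u_def v_def using lE by auto
              have d1: "d v u \<le> 1" unfolding d_def by (rule pdist_adj[OF adj])
              have "\<bar>hv \<sigma> v - hv \<sigma> u\<bar> \<le> d v u * (1/3)^l" unfolding d_def
                by (rule pdist_lower[of l _ _ _ 1]) (use hv_lip adj in auto)
              moreover have "\<bar>hv \<sigma> v - hv \<sigma> u\<bar> = (1/3)^l" using hv_lip[of \<sigma> E] lE unfolding u_def v_def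
                by (simp add: abs_minus_commute)
              ultimately have dpos: "d v u > 0" by (smt (verit) mult_nonpos_nonneg zero_le_power zero_less_power divide_pos_pos)
              have vuP: "(v, u) \<in> P" using uvV False unfolding P_def by auto
              have "norm (f v - f u) / d v u \<le> A'" using Au[OF vuP] Ar by simp
              then have "norm (f v - f u) \<le> A' * d v u" using dpos by (simp add: field_simps)
              also have "\<dots> \<le> A'" using d1 A'pos by (simp add: mult_left_le)
              finally have "b * norm (f v - f u) \<le> U" unfolding U_def using b by (simp add: mult_left_mono)
              then show ?thesis using ab[of "f v - f u"] unfolding u_def v_def by simp
            qed
          qed
          have H2: "\<forall>E i j. length E < l \<longrightarrow> i \<noteq> j \<longrightarrow> Lo * 3^(l - length E - 1) \<le> N (f (Inner E (PT i)) - f (Inner E (PT j)))"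
          proof (intro allI impI)
            fix E :: "plabel list" and i j :: nat assume lE: "length E < l" and ij: "i \<noteq> j"
            have tV: "Inner E (PT k) \<in> V" for k unfolding V_def
              by (rule isend_pverts[of \<sigma> "BT k # E"]) (use lE in \<open>auto simp: isend_def Let_def\<close>)
            have P1: "(Inner E (PT i), Inner E (PT j)) \<in> P" using tV ij unfolding P_def by auto
            have dd: "d (Inner E (PT i)) (Inner E (PT j)) \<ge> 3 ^ (l - length E - 1)" unfolding d_def
              by (rule dist_tt[OF lE ij])
            then have "d (Inner E (PT i)) (Inner E (PT j)) > 0" by (smt (verit) zero_less_power)
            from lowb[OF P1 this] dd Lopos show "Lo * 3^(l - length E - 1) \<le> N (f (Inner E (PT i)) - f (Inner E (PT j)))"
              by (smt (verit) mult_left_mono)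
          qed
          have up: "N (f (snd (pend \<sigma> [])) - f (fst (pend \<sigma> []))) \<le> 3^l * (U - real l * (c/3 * Lo powr p * U powr (1 - p)))"
            by (rule main_ind[OF nfN c p bp Lopos Upos H1 H2]) simp
          have "Lo * 3^l \<le> Lo * d R S" using dRS Lopos by simp
          also have "\<dots> \<le> N (f R - f S)" by (rule lowb[OF RSP dRSpos])
          also have "\<dots> = N (f S - f R)" by (rule comm)
          finally have "Lo * 3^l \<le> 3^l * (U - real l * (c/3 * Lo powr p * U powr (1 - p)))" using up by (simp only: pend.simps fst_conv snd_conv)
          then have "3^l * Lo \<le> 3^l * (U - real l * (c/3 * Lo powr p * U powr (1 - p)))" by (simp add: mult.commute)
          then have hh: "Lo \<le> U - real l * (c/3 * Lo powr p * U powr (1 - p))" by (rule mult_left_le_imp_le) simp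
          have fa: "(c/3) powr (1/p) * real l powr (1/p) \<le> U / Lo"
            by (rule final_alg[OF Upos Lopos c p _ hh]) simp
          have "C * real l powr (1 / p) = (a / b) * ((c/3) powr (1/p) * real l powr (1/p))"
            unfolding C_def by simp
          also have "\<dots> \<le> (a / b) * (U / Lo)" using fa a b by (intro mult_left_mono) auto
          also have "\<dots> = A' * B'" unfolding U_def Lo_def using a b by (simp add: field_simps)
          finally show ?thesis using Ar real dis by simp
        qed
      qed
    qed
  qed
  show ?thesis using Cpos main by blast
qed


end
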